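(* Let $\mathcal{C}$ be the structure described in the context. Then $R(x,y)$ forms an antichain tree modulo $\mathrm{Th}(\mathcal{C})$: there is $\langle c_\eta\rangle_{\eta\in{}^{\omega>}2}$ in a monster model of $\mathrm{Th}(\mathcal{C})$ such that for every $X\subseteq{}^{\omega>}2$, $\{R(x,c_\eta):\eta\in X\}$ is consistent if and only if $X$ is an antichain.
   Context: ${}^{\omega>}2$ is the binary tree of finite $0/1$-sequences with initial-segment order $\trianglelefteq$; ${}^{n>}2$ is the set of sequences of length $<n$. A set $X$ is an antichain if its elements are pairwise $\trianglelefteq$-incomparable; $X\subseteq{}^{n>}2$ is a maximal antichain in ${}^{n>}2$ if it is an antichain not properly contained in any antichain of ${}^{n>}2$ (a maximal antichain in ${}^{n>}2$ is also maximal in ${}^{m>}2$ for $m\ge n$). The language is $\{R\}$ with $R$ binary. $\mathcal{C}$ has universe the disjoint union of $A=\{a_X: X$ a maximal antichain in ${}^{n>}2$ for some $n<\omega\}$ and $B=\{b_\eta:\eta\in{}^{\omega>}2\}$, and $R^{\mathcal{C}}=\{(a_X,b_\eta): \eta\in X\}$. (This is the union of the finite structures $\mathcal{C}_n$ with universe $\{a_X:X$ maximal antichain in ${}^{n>}2\}\cup\{b_\eta:\eta\in{}^{n>}2\}$ and the same relation.) *)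

theory Defs
  imports Main "HOL-Library.Sublist"
begin

text \<open>Finite 0/1-sequences are modelled as bool lists; the initial-segment order is prefix.\<close>

definition antichain :: "bool list set \<Rightarrow> bool" where
  "antichain X \<longleftrightarrow> (\<forall>\<eta>\<in>X. \<forall>\<nu>\<in>X. prefix \<eta> \<nu> \<longrightarrow> \<eta> = \<nu>)"

definition seqs_below :: "nat \<Rightarrow> bool list set" where
  "seqs_below n = {\<eta>. length \<eta> < n}"

definition max_antichain_in :: "nat \<Rightarrow> bool list set \<Rightarrow> bool" where
  "max_antichain_in n X \<longleftrightarrow> X \<subseteq> seqs_below n \<and> antichain X \<and>
     (\<forall>Y. antichain Y \<and> X \<subseteq> Y \<and> Y \<subseteq> seqs_below n \<longrightarrow> Y = X)"

datatype elt = A "bool list set" | B "bool list"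

definition C_univ :: "elt set" where
  "C_univ = {A X | X. \<exists>n. max_antichain_in n X} \<union> {B \<eta> | \<eta>. True}"

fun C_rel :: "elt \<Rightarrow> elt \<Rightarrow> bool" where
  "C_rel (A X) (B \<eta>) = (\<eta> \<in> X)"
| "C_rel _ _ = False"

datatype fm = Rel nat nat | Eq nat nat | Neg fm | Conj fm fm | Ex nat fm

fun fv :: "fm \<Rightarrow> nat set" where
  "fv (Rel i j) = {i, j}"
| "fv (Eq i j) = {i, j}"
| "fv (Neg \<phi>) = fv \<phi>"
| "fv (Conj \<phi> \<psi>) = fv \<phi> \<union> fv \<psi>"
| "fv (Ex x \<phi>) = fv \<phi> - {x}"

fun sat :: "'a set \<Rightarrow> ('a \<Rightarrow> 'a \<Rightarrow> bool) \<Rightarrow> (nat \<Rightarrow> 'a) \<Rightarrow> fm \<Rightarrow> bool" where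
  "sat U R e (Rel i j) = R (e i) (e j)"
| "sat U R e (Eq i j) = (e i = e j)"
| "sat U R e (Neg \<phi>) = (\<not> sat U R e \<phi>)"
| "sat U R e (Conj \<phi> \<psi>) = (sat U R e \<phi> \<and> sat U R e \<psi>)"
| "sat U R e (Ex x \<phi>) = (\<exists>a\<in>U. sat U R (e(x := a)) \<phi>)"

definition sentence :: "fm \<Rightarrow> bool" where
  "sentence \<phi> \<longleftrightarrow> fv \<phi> = {}"

definition is_model :: "'a set \<Rightarrow> ('a \<Rightarrow> 'a \<Rightarrow> bool) \<Rightarrow> fm set \<Rightarrow> bool" where
  "is_model U R T \<longleftrightarrow> U \<noteq> {} \<and> (\<forall>\<phi>\<in>T. \<forall>e. range e \<subseteq> U \<longrightarrow> sat U R e \<phi>)"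

definition Th_C :: "fm set" where
  "Th_C = {\<phi>. sentence \<phi> \<and> (\<forall>e. range e \<subseteq> C_univ \<longrightarrow> sat C_univ C_rel e \<phi>)}"

end

theory Submission
  imports Defs "HOL-Library.Countable_Set"
begin

lemma finite_seqs_below: "finite (seqs_below n)"
proof -
  have "seqs_below n \<subseteq> {xs :: bool list. set xs \<subseteq> UNIV \<and> length xs \<le> n}"
    by (auto simp: seqs_below_def)
  moreover have "finite {xs :: bool list. set xs \<subseteq> UNIV \<and> length xs \<le> n}"
    by (rule finite_lists_length_le) simp
  ultimately show ?thesis by (rule finite_subset)
qed

lemma countable_C: "countable C_univ"
proof -
  have "C_univ \<subseteq> A ` Collect finite \<union> range B"
    using finite_seqs_below
    by (auto simp: C_univ_def max_antichain_in_def intro: finite_subset)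
  moreover have "countable (A ` Collect finite \<union> range B)"
    using countable_Collect_finite by auto
  ultimately show ?thesis by (rule countable_subset)
qed

lemma extend_antichain:
  assumes "finite F" "antichain F"
  shows "\<exists>n Y. max_antichain_in n Y \<and> F \<subseteq> Y"
proof -
  obtain n where n: "F \<subseteq> seqs_below n"
  proof
    show "F \<subseteq> seqs_below (Suc (Max (insert 0 (length ` F))))"
      using assms(1) by (auto simp: seqs_below_def less_Suc_eq_le)
  qed
  define S where "S = {Y. antichain Y \<and> F \<subseteq> Y \<and> Y \<subseteq> seqs_below n}"
  have "finite S" unfolding S_def
    by (rule finite_subset[of _ "Pow (seqs_below n)"]) (auto simp: finite_seqs_below)
  moreover have "S \<noteq> {}" using assms n unfolding S_def by auto
  ultimately obtain Y where Y: "Y \<in> S" and mx: "\<forall>b\<in>S. Y \<le> b \<longrightarrow> Y = b"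
    using finite_has_maximal by blast
  have "max_antichain_in n Y"
    using Y mx unfolding max_antichain_in_def S_def by auto
  then show ?thesis using Y unfolding S_def by blast
qed

lemma sat_transfer:
  assumes inj: "inj_on f C_univ" and g: "g = inv_into C_univ f"
  shows "range e \<subseteq> f ` C_univ \<Longrightarrow>
    sat (f ` C_univ) (\<lambda>x y. C_rel (g x) (g y)) e \<phi> = sat C_univ C_rel (g \<circ> e) \<phi>"
proof (induction \<phi> arbitrary: e)
  case (Eq i j)
  have "e i \<in> f ` C_univ" "e j \<in> f ` C_univ" using Eq by auto
  then show ?case using inj g by (auto simp: inv_into_f_f)
next
  case (Ex x \<phi>)
  have "(\<exists>a\<in>f ` C_univ. sat (f ` C_univ) (\<lambda>x y. C_rel (g x) (g y)) (e(x := a)) \<phi>)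
      = (\<exists>b\<in>C_univ. sat (f ` C_univ) (\<lambda>x y. C_rel (g x) (g y)) (e(x := f b)) \<phi>)" by auto
  also have "\<dots> = (\<exists>b\<in>C_univ. sat C_univ C_rel (g \<circ> (e(x := f b))) \<phi>)"
    using Ex by (intro bex_cong refl Ex.IH) auto
  also have "\<dots> = (\<exists>b\<in>C_univ. sat C_univ C_rel ((g \<circ> e)(x := b)) \<phi>)"
  proof (intro bex_cong refl)
    fix b assume "b \<in> C_univ"
    then have "g \<circ> (e(x := f b)) = (g \<circ> e)(x := b)" using inj g by (auto simp: inv_into_f_f)
    then show "sat C_univ C_rel (g \<circ> (e(x := f b))) \<phi> = sat C_univ C_rel ((g \<circ> e)(x := b)) \<phi>"
      by simp
  qed
  finally show ?case by (simp only: sat.simps)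
qed auto

theorem proposition6p2:
  assumes "infinite (UNIV :: 'm set)"
  shows "\<exists>(U :: 'm set) (R :: 'm \<Rightarrow> 'm \<Rightarrow> bool) (c :: bool list \<Rightarrow> 'm).
           is_model U R Th_C \<and> (\<forall>\<eta>. c \<eta> \<in> U) \<and>
           (\<forall>X. (\<forall>F. finite F \<and> F \<subseteq> X \<longrightarrow> (\<exists>a\<in>U. \<forall>\<eta>\<in>F. R a (c \<eta>)))
                  \<longleftrightarrow> antichain X)"
proof -
  obtain h :: "nat \<Rightarrow> 'm" where h: "inj h"
    using infinite_countable_subset[OF assms] by blast
  define f where "f = h \<circ> to_nat_on C_univ"
  have inj: "inj_on f C_univ"
    unfolding f_def using h countable_C inj_on_to_nat_on
    by (metis comp_inj_on inj_on_subset subset_UNIV)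
  define g where "g = inv_into C_univ f"
  have gf: "g (f x) = x" if "x \<in> C_univ" for x
    using inj that by (simp add: g_def inv_into_f_f)
  define U where "U = f ` C_univ"
  define R where "R = (\<lambda>x y. C_rel (g x) (g y))"
  define c where "c = (\<lambda>\<eta>. f (B \<eta>))"
  have BC: "B \<eta> \<in> C_univ" for \<eta> by (simp add: C_univ_def)
  have model: "is_model U R Th_C"
    unfolding is_model_def
  proof (intro conjI ballI allI impI)
    show "U \<noteq> {}" using BC unfolding U_def by blast
    fix \<phi> and e :: "nat \<Rightarrow> 'm" assume phi: "\<phi> \<in> Th_C" and e: "range e \<subseteq> U"
    have "range (g \<circ> e) \<subseteq> C_univ"
    proof
      fix y assume "y \<in> range (g \<circ> e)"
      then obtain i where "y = g (e i)" by auto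
      moreover obtain x where "x \<in> C_univ" "e i = f x" using e unfolding U_def by blast
      ultimately show "y \<in> C_univ" using gf by simp
    qed
    then have "sat C_univ C_rel (g \<circ> e) \<phi>" using phi by (simp add: Th_C_def)
    then show "sat U R e \<phi>"
      using sat_transfer[OF inj refl, of e \<phi>] e unfolding U_def R_def g_def by simp
  qed
  have key: "(\<forall>F. finite F \<and> F \<subseteq> X \<longrightarrow> (\<exists>a\<in>U. \<forall>\<eta>\<in>F. R a (c \<eta>))) \<longleftrightarrow> antichain X" for X
  proof
    assume H: "\<forall>F. finite F \<and> F \<subseteq> X \<longrightarrow> (\<exists>a\<in>U. \<forall>\<eta>\<in>F. R a (c \<eta>))"
    show "antichain X" unfolding antichain_def
    proof (intro ballI impI)
      fix \<eta> \<nu> assume in1: "\<eta> \<in> X" "\<nu> \<in> X" and p: "prefix \<eta> \<nu>"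
      obtain a where a: "a \<in> U" "R a (c \<eta>)" "R a (c \<nu>)"
        using H[rule_format, of "{\<eta>, \<nu>}"] in1 by auto
      obtain x where x: "x \<in> C_univ" "a = f x" using a unfolding U_def by blast
      have "C_rel x (B \<eta>)" "C_rel x (B \<nu>)"
        using a x gf BC unfolding R_def c_def by auto
      then obtain Y where "x = A Y" "\<eta> \<in> Y" "\<nu> \<in> Y"
        by (cases x) auto
      moreover obtain n where "max_antichain_in n Y" using x \<open>x = A Y\<close> by (auto simp: C_univ_def)
      ultimately show "\<eta> = \<nu>" using p by (auto simp: max_antichain_in_def antichain_def)
    qed
  next
    assume ac: "antichain X"
    show "\<forall>F. finite F \<and> F \<subseteq> X \<longrightarrow> (\<exists>a\<in>U. \<forall>\<eta>\<in>F. R a (c \<eta>))"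
    proof (intro allI impI)
      fix F assume F: "finite F \<and> F \<subseteq> X"
      then have "antichain F" using ac by (auto simp: antichain_def)
      then obtain n Y where Y: "max_antichain_in n Y" "F \<subseteq> Y"
        using extend_antichain F by blast
      have AC: "A Y \<in> C_univ" using Y by (auto simp: C_univ_def)
      show "\<exists>a\<in>U. \<forall>\<eta>\<in>F. R a (c \<eta>)"
      proof (intro bexI ballI)
        show "f (A Y) \<in> U" using AC by (simp add: U_def)
        fix \<eta> assume "\<eta> \<in> F"
        then show "R (f (A Y)) (c \<eta>)" using Y AC BC gf by (auto simp: R_def c_def)
      qed
    qed
  qed
  show ?thesis
    by (rule exI[of _ U], rule exI[of _ R], rule exI[of _ c])
       (use model key BC in \<open>auto simp: U_def c_def\<close>)
qed

end
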